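(* Let $\mathcal M=(N,\mathcal I)$ be a matroid, let $h\ge1$ be an integer, let $\mathcal M_h=(N,\mathcal I_h)$ be its $h$-fold union with rank function $r_h$. Let $Q\subseteq N$ and $e\in N\setminus Q$ satisfy $r_h(Q\cup\{e\})=r_h(Q)$. Then $e\in\mathrm{span}(D(Q,h))$.
   Context: The $h$-fold union $\mathcal M_h$ is the matroid on $N$ whose independent sets are the unions of $h$ independent sets of $\mathcal M$. $r$ is the rank function of $\mathcal M$, $\mathrm{span}(A)=\{f\in N: r(A\cup\{f\})=r(A)\}$, and $D(Q,\lambda)$ is the unique inclusion-wise maximal set among the maximizers of $|U|-\lambda r(U)$ over $U\subseteq Q$. *)

theory Defs
  imports Main Complex_Main
begin

definition matroid :: "'a set \<Rightarrow> 'a set set \<Rightarrow> bool" where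
  "matroid N Ind \<longleftrightarrow>
     finite N \<and> (\<forall>X\<in>Ind. X \<subseteq> N) \<and> {} \<in> Ind \<and>
     (\<forall>X Y. X \<in> Ind \<and> Y \<subseteq> X \<longrightarrow> Y \<in> Ind) \<and>
     (\<forall>X Y. X \<in> Ind \<and> Y \<in> Ind \<and> card X < card Y \<longrightarrow>
        (\<exists>y\<in>Y - X. insert y X \<in> Ind))"

definition mrank :: "'a set set \<Rightarrow> 'a set \<Rightarrow> nat" where
  "mrank Ind A = Max {card X | X. X \<subseteq> A \<and> X \<in> Ind}"

definition union_indep :: "'a set set \<Rightarrow> nat \<Rightarrow> 'a set set" where
  "union_indep Ind h = {X. \<exists>F. (\<forall>i<h. F i \<in> Ind) \<and> X = (\<Union>i<h. F i)}"

definition mspan :: "'a set \<Rightarrow> 'a set set \<Rightarrow> 'a set \<Rightarrow> 'a set" where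
  "mspan N Ind A = {f \<in> N. mrank Ind (A \<union> {f}) = mrank Ind A}"

definition Dval :: "'a set set \<Rightarrow> real \<Rightarrow> 'a set \<Rightarrow> real" where
  "Dval Ind lam U = real (card U) - lam * real (mrank Ind U)"

definition is_Dmaximizer :: "'a set set \<Rightarrow> 'a set \<Rightarrow> real \<Rightarrow> 'a set \<Rightarrow> bool" where
  "is_Dmaximizer Ind Q lam U \<longleftrightarrow> U \<subseteq> Q \<and> (\<forall>V. V \<subseteq> Q \<longrightarrow> Dval Ind lam V \<le> Dval Ind lam U)"

definition Dset :: "'a set set \<Rightarrow> 'a set \<Rightarrow> real \<Rightarrow> 'a set" where
  "Dset Ind Q lam = (THE U. is_Dmaximizer Ind Q lam U \<and>
      (\<forall>V. is_Dmaximizer Ind Q lam V \<and> U \<subseteq> V \<longrightarrow> V = U))"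

end

theory Submission
  imports Defs
begin



definition rankf :: "'a set \<Rightarrow> ('a set \<Rightarrow> nat) \<Rightarrow> bool" where
 "rankf N r \<longleftrightarrow> finite N \<and> r {} = 0 \<and> (\<forall>A B. A \<subseteq> B \<and> B \<subseteq> N \<longrightarrow> r A \<le> r B) \<and>
   (\<forall>A x. A \<subseteq> N \<and> x \<in> N \<longrightarrow> r (insert x A) \<le> Suc (r A)) \<and>
   (\<forall>A B. A \<subseteq> N \<and> B \<subseteq> N \<longrightarrow> r (A \<union> B) + r (A \<inter> B) \<le> r A + r B)"

lemma rankf_fin: "rankf N r \<Longrightarrow> finite N" by (simp add: rankf_def)
lemma rankf_empty: "rankf N r \<Longrightarrow> r {} = 0" by (simp add: rankf_def)
lemma rankf_mono: "rankf N r \<Longrightarrow> A \<subseteq> B \<Longrightarrow> B \<subseteq> N \<Longrightarrow> r A \<le> r B" by (simp add: rankf_def)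
lemma rankf_ins: "rankf N r \<Longrightarrow> A \<subseteq> N \<Longrightarrow> x \<in> N \<Longrightarrow> r (insert x A) \<le> Suc (r A)" by (simp add: rankf_def)
lemma rankf_sub: "rankf N r \<Longrightarrow> A \<subseteq> N \<Longrightarrow> B \<subseteq> N \<Longrightarrow> r (A \<union> B) + r (A \<inter> B) \<le> r A + r B"
  by (simp add: rankf_def)

lemma rankf_restrict: "rankf N r \<Longrightarrow> M \<subseteq> N \<Longrightarrow> rankf M r"
  unfolding rankf_def
  apply (intro conjI allI impI)
      apply (meson finite_subset)
     apply simp
    apply (meson subset_trans)
   apply (meson subset_iff)
  apply (meson subset_trans)
  done

lemma rankf_card: assumes "rankf N r" "A \<subseteq> N" shows "r A \<le> card A"
proof -
  have "finite A" using assms rankf_fin finite_subset by blast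
  then show ?thesis using assms(2)
  proof (induction A rule: finite_induct)
    case empty then show ?case using rankf_empty[OF assms(1)] by simp
  next
    case (insert x F)
    then have "r (insert x F) \<le> Suc (r F)" using rankf_ins[OF assms(1)] by auto
    then show ?case using insert by simp
  qed
qed

lemma rankf_indep_subset:
  assumes "rankf N r" "A \<subseteq> N" "r A = card A" "B \<subseteq> A" shows "r B = card B"
proof -
  have fA: "finite A" using assms rankf_fin finite_subset by blast
  have "r (B \<union> (A - B)) + r (B \<inter> (A - B)) \<le> r B + r (A - B)"
    using rankf_sub[OF assms(1), of B "A - B"] assms by blast
  moreover have "B \<union> (A - B) = A" "B \<inter> (A - B) = {}" using assms by auto
  moreover have "r (A - B) \<le> card (A - B)" using rankf_card[OF assms(1)] assms by blast
  moreover have "card A = card B + card (A - B)"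
  proof -
    have "card (B \<union> (A - B)) = card B + card (A - B)"
      by (rule card_Un_disjoint) (use fA assms(4) finite_subset in auto)
    then show ?thesis using \<open>B \<union> (A - B) = A\<close> by simp
  qed
  moreover have "r B \<le> card B" using rankf_card[OF assms(1)] assms by blast
  ultimately show ?thesis using rankf_empty[OF assms(1)] assms(3) by simp
qed

lemma rankf_contract:
  assumes "rankf N r" "e \<in> N"
  shows "rankf (N - {e}) (\<lambda>S. r (insert e S) - r {e})"
proof -
  have ge: "\<And>S. S \<subseteq> N \<Longrightarrow> r {e} \<le> r (insert e S)"
    by (rule rankf_mono[OF assms(1)]) (use assms(2) in auto)
  show ?thesis unfolding rankf_def
  proof (intro conjI allI impI)
    show "finite (N - {e})" using rankf_fin[OF assms(1)] by simp
    show "r (insert e {}) - r {e} = 0" by simp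
  next
    fix A B assume "A \<subseteq> B \<and> B \<subseteq> N - {e}"
    then have "r (insert e A) \<le> r (insert e B)" by (intro rankf_mono[OF assms(1)]) (use assms(2) in auto)
    then show "r (insert e A) - r {e} \<le> r (insert e B) - r {e}" by simp
  next
    fix A x assume h: "A \<subseteq> N - {e} \<and> x \<in> N - {e}"
    have "r (insert x (insert e A)) \<le> Suc (r (insert e A))"
      by (rule rankf_ins[OF assms(1)]) (use h assms(2) in auto)
    moreover have "r {e} \<le> r (insert e A)" by (rule ge) (use h in auto)
    moreover have "insert e (insert x A) = insert x (insert e A)" by auto
    ultimately show "r (insert e (insert x A)) - r {e} \<le> Suc (r (insert e A) - r {e})"
      by simp
  next
    fix A B assume h: "A \<subseteq> N - {e} \<and> B \<subseteq> N - {e}"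
    have "r (insert e A \<union> insert e B) + r (insert e A \<inter> insert e B) \<le> r (insert e A) + r (insert e B)"
      by (rule rankf_sub[OF assms(1)]) (use h assms(2) in auto)
    moreover have "insert e A \<union> insert e B = insert e (A \<union> B)" "insert e A \<inter> insert e B = insert e (A \<inter> B)" by auto
    ultimately have sb: "r (insert e (A \<union> B)) + r (insert e (A \<inter> B)) \<le> r (insert e A) + r (insert e B)" by simp
    have hh: "A \<subseteq> N" "B \<subseteq> N" "A \<union> B \<subseteq> N" "A \<inter> B \<subseteq> N" using h by auto
    note g = ge[OF hh(1)] ge[OF hh(2)] ge[OF hh(3)] ge[OF hh(4)]
    from sb g show "r (insert e (A \<union> B)) - r {e} + (r (insert e (A \<inter> B)) - r {e})
         \<le> r (insert e A) - r {e} + (r (insert e B) - r {e})" by linarith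
  qed
qed

lemma rankf_lift:
  assumes "rankf N r" "e \<in> N" "A \<subseteq> N - {e}" "r (insert e A) - r {e} = card A"
  shows "\<exists>A'. A \<subseteq> A' \<and> A' \<subseteq> insert e A \<and> r A' = card A' \<and> card A' = card A + r {e}"
proof -
  have fA: "finite A" using assms rankf_fin finite_subset by blast
  have le1: "r {e} \<le> 1" using rankf_ins[OF assms(1), of "{}" e] assms(2) rankf_empty[OF assms(1)] by simp
  have eA: "e \<notin> A" using assms(3) by blast
  show ?thesis
  proof (cases "r {e} = 1")
    case True
    have "r {e} \<le> r (insert e A)" using rankf_mono[OF assms(1), of "{e}" "insert e A"] assms(2,3) by auto
    then have "r (insert e A) = card (insert e A)" using assms(4) fA eA True by auto
    then show ?thesis using True fA eA by (intro exI[of _ "insert e A"]) auto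
  next
    case False
    then have z: "r {e} = 0" using le1 by simp
    have "r (A \<union> {e}) + r (A \<inter> {e}) \<le> r A + r {e}" using rankf_sub[OF assms(1), of A "{e}"] assms(2,3) by blast
    then have "r (insert e A) \<le> r A" using z by simp
    moreover have "r A \<le> card A" using rankf_card[OF assms(1)] assms(3) by blast
    ultimately have "r A = card A" using assms(4) z by simp
    then show ?thesis using z by (intro exI[of _ A]) auto
  qed
qed


lemma union2:
  assumes "finite X" "rankf X r1" "rankf X r2"
  shows "\<exists>A B Y. A \<subseteq> X \<and> B \<subseteq> X \<and> Y \<subseteq> X \<and> r1 A = card A \<and> r2 B = card B \<and>
     card (X - Y) + r1 Y + r2 Y \<le> card (A \<union> B)"
  using assms
proof (induction X arbitrary: r1 r2 rule: finite_induct)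
  case empty
  then show ?case using rankf_empty by (intro exI[of _ "{}"]) auto
next
  case (insert e X)
  let ?F = "insert e X"
  have eF: "e \<in> ?F" by simp
  have FX: "?F - {e} = X" using insert(2) by auto
  define r1' where "r1' = (\<lambda>S. r1 (insert e S) - r1 {e})"
  define r2' where "r2' = (\<lambda>S. r2 (insert e S) - r2 {e})"
  have c1: "rankf X r1'" using rankf_contract[OF insert(4) eF] FX r1'_def by simp
  have c2: "rankf X r2'" using rankf_contract[OF insert(5) eF] FX r2'_def by simp
  have s1: "rankf X r1" "rankf X r2" using rankf_restrict[OF insert(4) subset_insertI] rankf_restrict[OF insert(5) subset_insertI] by auto
  obtain A1 B1 Y where h1: "A1 \<subseteq> X" "B1 \<subseteq> X" "Y \<subseteq> X" "r1' A1 = card A1" "r2 B1 = card B1"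
      "card (X - Y) + r1' Y + r2 Y \<le> card (A1 \<union> B1)"
    using insert(3)[OF c1 s1(2)] by blast
  obtain A2 B2 W where h2: "A2 \<subseteq> X" "B2 \<subseteq> X" "W \<subseteq> X" "r1 A2 = card A2" "r2' B2 = card B2"
      "card (X - W) + r1 W + r2' W \<le> card (A2 \<union> B2)"
    using insert(3)[OF s1(1) c2] by blast
  obtain A1' where a1: "A1 \<subseteq> A1'" "A1' \<subseteq> insert e A1" "r1 A1' = card A1'" "card A1' = card A1 + r1 {e}"
  proof -
    have "A1 \<subseteq> ?F - {e}" using h1(1) insert(2) by auto
    moreover have "r1 (insert e A1) - r1 {e} = card A1" using h1(4) r1'_def by simp
    ultimately have "\<exists>A'. A1 \<subseteq> A' \<and> A' \<subseteq> insert e A1 \<and> r1 A' = card A' \<and> card A' = card A1 + r1 {e}"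
      by (rule rankf_lift[OF insert(4) eF])
    then show ?thesis using that by blast
  qed
  obtain B2' where b2: "B2 \<subseteq> B2'" "B2' \<subseteq> insert e B2" "r2 B2' = card B2'" "card B2' = card B2 + r2 {e}"
  proof -
    have "B2 \<subseteq> ?F - {e}" using h2(2) insert(2) by auto
    moreover have "r2 (insert e B2) - r2 {e} = card B2" using h2(5) r2'_def by simp
    ultimately have "\<exists>A'. B2 \<subseteq> A' \<and> A' \<subseteq> insert e B2 \<and> r2 A' = card A' \<and> card A' = card B2 + r2 {e}"
      by (rule rankf_lift[OF insert(5) eF])
    then show ?thesis using that by blast
  qed
  have fX: "finite X" by fact
  have fin: "finite A1" "finite B1" "finite A2" "finite B2" "finite Y" "finite W"
    using h1 h2 fX finite_subset by blast+
  have card1: "card (A1' \<union> B1) = card (A1 \<union> B1) + r1 {e}"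
  proof (cases "A1' = A1")
    case True then show ?thesis using a1(4) by simp
  next
    case False
    then have "A1' = insert e A1" using a1(1,2) by blast
    then have "A1' \<union> B1 = insert e (A1 \<union> B1)" by simp
    moreover have "e \<notin> A1 \<union> B1" using h1 insert(2) by blast
    ultimately show ?thesis using a1(4) \<open>A1' = insert e A1\<close> fin by (simp add: card_insert_if)
  qed
  have card2: "card (A2 \<union> B2') = card (A2 \<union> B2) + r2 {e}"
  proof (cases "B2' = B2")
    case True then show ?thesis using b2(4) by simp
  next
    case False
    then have "B2' = insert e B2" using b2(1,2) by blast
    then have "A2 \<union> B2' = insert e (A2 \<union> B2)" by simp
    moreover have "e \<notin> A2 \<union> B2" using h2 insert(2) by blast
    ultimately show ?thesis using b2(4) \<open>B2' = insert e B2\<close> fin by (simp add: card_insert_if)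
  qed
  have ge1: "r1 {e} \<le> r1 (insert e Y)" by (rule rankf_mono[OF insert(4)]) (use h1(3) in auto)
  have ge2: "r2 {e} \<le> r2 (insert e W)" by (rule rankf_mono[OF insert(5)]) (use h2(3) in auto)
  define c1 where "c1 = card (X - Y) + r1 (insert e Y) + r2 Y"
  define c2 where "c2 = card (X - W) + r1 W + r2 (insert e W)"
  have w1: "c1 \<le> card (A1' \<union> B1)" using h1(6) card1 ge1 unfolding c1_def r1'_def by simp
  have w2: "c2 \<le> card (A2 \<union> B2')" using h2(6) card2 ge2 unfolding c2_def r2'_def by simp
  define S1 where "S1 = insert e (Y \<union> W)"
  define S2 where "S2 = Y \<inter> W"
  define d1 where "d1 = card (?F - S1) + r1 S1 + r2 S1"
  define d2 where "d2 = card (?F - S2) + r1 S2 + r2 S2"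
  have eW: "e \<notin> W" "e \<notin> Y" using h1(3) h2(3) insert(2) by blast+
  have "card (X - Y) + card (X - W) = card ((X - Y) \<union> (X - W)) + card ((X - Y) \<inter> (X - W))"
    by (rule card_Un_Int) (use fX in auto)
  moreover have "(X - Y) \<union> (X - W) = X - S2" "(X - Y) \<inter> (X - W) = X - (Y \<union> W)" unfolding S2_def by auto
  moreover have "?F - S1 = X - (Y \<union> W)" unfolding S1_def using insert(2) by auto
  moreover have "?F - S2 = insert e (X - S2)" unfolding S2_def using eW by auto
  moreover have "e \<notin> X - S2" using insert(2) by simp
  ultimately have cc: "card (?F - S1) + card (?F - S2) = card (X - Y) + card (X - W) + 1"
    using fX by simp
  have "r1 (insert e Y \<union> W) + r1 (insert e Y \<inter> W) \<le> r1 (insert e Y) + r1 W"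
    by (rule rankf_sub[OF insert(4)]) (use h1(3) h2(3) in auto)
  moreover have "insert e Y \<union> W = S1" "insert e Y \<inter> W = S2" unfolding S1_def S2_def using eW by auto
  ultimately have rr1: "r1 S1 + r1 S2 \<le> r1 (insert e Y) + r1 W" by simp
  have "r2 (Y \<union> insert e W) + r2 (Y \<inter> insert e W) \<le> r2 Y + r2 (insert e W)"
    by (rule rankf_sub[OF insert(5)]) (use h1(3) h2(3) in auto)
  moreover have "Y \<union> insert e W = S1" "Y \<inter> insert e W = S2" unfolding S1_def S2_def using eW by auto
  ultimately have rr2: "r2 S1 + r2 S2 \<le> r2 Y + r2 (insert e W)" by simp
  have key: "d1 + d2 \<le> c1 + c2 + 1" using cc rr1 rr2 unfolding d1_def d2_def c1_def c2_def by simp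
  have S1F: "S1 \<subseteq> ?F" "S2 \<subseteq> ?F" unfolding S1_def S2_def using h1(3) h2(3) by auto
  have A1'F: "A1' \<subseteq> ?F" "B1 \<subseteq> ?F" "A2 \<subseteq> ?F" "B2' \<subseteq> ?F" using a1(2) b2(2) h1 h2 by auto
  have "d1 \<le> c1 \<or> d1 \<le> c2 \<or> d2 \<le> c1 \<or> d2 \<le> c2" using key by linarith
  then show ?case
  proof (elim disjE)
    assume "d1 \<le> c1" then show ?thesis using w1 S1F A1'F a1(3) h1(5) unfolding d1_def by (intro exI[of _ A1'] exI[of _ B1] exI[of _ S1]) auto
  next
    assume "d1 \<le> c2" then show ?thesis using w2 S1F A1'F b2(3) h2(4) unfolding d1_def by (intro exI[of _ A2] exI[of _ B2'] exI[of _ S1]) auto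
  next
    assume "d2 \<le> c1" then show ?thesis using w1 S1F A1'F a1(3) h1(5) unfolding d2_def by (intro exI[of _ A1'] exI[of _ B1] exI[of _ S2]) auto
  next
    assume "d2 \<le> c2" then show ?thesis using w2 S1F A1'F b2(3) h2(4) unfolding d2_def by (intro exI[of _ A2] exI[of _ B2'] exI[of _ S2]) auto
  qed
qed

lemma union2_le:
  assumes "rankf N r1" "rankf N r2" "X \<subseteq> N" "A \<subseteq> X" "B \<subseteq> X" "Y \<subseteq> X"
    "r1 A = card A" "r2 B = card B"
  shows "card (A \<union> B) \<le> card (X - Y) + r1 Y + r2 Y"
proof -
  have fX: "finite X" using assms rankf_fin finite_subset by blast
  have "A \<union> B = ((A \<union> B) - Y) \<union> (A \<inter> Y) \<union> (B \<inter> Y)" by auto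
  then have "card (A \<union> B) \<le> card ((A \<union> B) - Y) + card (A \<inter> Y) + card (B \<inter> Y)"
  proof -
    have "card (((A \<union> B) - Y) \<union> (A \<inter> Y) \<union> (B \<inter> Y)) \<le> card (((A \<union> B) - Y) \<union> (A \<inter> Y)) + card (B \<inter> Y)"
      by (rule card_Un_le)
    moreover have "card (((A \<union> B) - Y) \<union> (A \<inter> Y)) \<le> card ((A \<union> B) - Y) + card (A \<inter> Y)"
      by (rule card_Un_le)
    moreover have "card (A \<union> B) = card (((A \<union> B) - Y) \<union> (A \<inter> Y) \<union> (B \<inter> Y))"
      using \<open>A \<union> B = ((A \<union> B) - Y) \<union> (A \<inter> Y) \<union> (B \<inter> Y)\<close> by (rule arg_cong)
    ultimately show ?thesis by linarith
  qed
  moreover have "card ((A \<union> B) - Y) \<le> card (X - Y)" using fX assms by (intro card_mono) auto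
  moreover have "r1 (A \<inter> Y) = card (A \<inter> Y)" by (rule rankf_indep_subset[OF assms(1) _ assms(7)]) (use assms in auto)
  moreover have "r2 (B \<inter> Y) = card (B \<inter> Y)" by (rule rankf_indep_subset[OF assms(2) _ assms(8)]) (use assms in auto)
  moreover have "r1 (A \<inter> Y) \<le> r1 Y" by (rule rankf_mono[OF assms(1)]) (use assms in auto)
  moreover have "r2 (B \<inter> Y) \<le> r2 Y" by (rule rankf_mono[OF assms(2)]) (use assms in auto)
  ultimately show ?thesis by linarith
qed




definition Un2 :: "('a set \<Rightarrow> nat) \<Rightarrow> ('a set \<Rightarrow> nat) \<Rightarrow> 'a set \<Rightarrow> nat" where
  "Un2 r1 r2 X = Min ((\<lambda>Y. card (X - Y) + r1 Y + r2 Y) ` Pow X)"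

lemma U_le: "finite X \<Longrightarrow> Y \<subseteq> X \<Longrightarrow> Un2 r1 r2 X \<le> card (X - Y) + r1 Y + r2 Y"
  unfolding Un2_def by (intro Min_le) auto

lemma U_ex: "finite X \<Longrightarrow> \<exists>Y. Y \<subseteq> X \<and> Un2 r1 r2 X = card (X - Y) + r1 Y + r2 Y"
proof -
  assume "finite X"
  then have "Un2 r1 r2 X \<in> (\<lambda>Y. card (X - Y) + r1 Y + r2 Y) ` Pow X"
    unfolding Un2_def by (intro Min_in) auto
  then show ?thesis by auto
qed

lemma rankf_U:
  assumes "rankf N r1" "rankf N r2" shows "rankf N (Un2 r1 r2)"
proof -
  have fN: "finite N" using assms rankf_fin by blast
  have fin: "\<And>A. A \<subseteq> N \<Longrightarrow> finite A" using fN finite_subset by blast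
  show ?thesis unfolding rankf_def
  proof (intro conjI allI impI)
    show "finite N" by fact
    have "Un2 r1 r2 {} \<le> card ({} - {}) + r1 {} + r2 {}" using U_le[of "{}" "{}" r1 r2] by simp
    then show "Un2 r1 r2 {} = 0" using rankf_empty[OF assms(1)] rankf_empty[OF assms(2)] by simp
  next
    fix A B assume h: "A \<subseteq> B \<and> B \<subseteq> N"
    have fB: "finite B" "finite A" using fin h by auto
    obtain Y where Y: "Y \<subseteq> B" "Un2 r1 r2 B = card (B - Y) + r1 Y + r2 Y" using U_ex[OF fB(1)] by blast
    have "Un2 r1 r2 A \<le> card (A - Y \<inter> A) + r1 (Y \<inter> A) + r2 (Y \<inter> A)" by (rule U_le[OF fB(2)]) auto
    moreover have "card (A - Y \<inter> A) \<le> card (B - Y)" using h fB by (intro card_mono) auto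
    moreover have "r1 (Y \<inter> A) \<le> r1 Y" by (rule rankf_mono[OF assms(1)]) (use Y h in auto)
    moreover have "r2 (Y \<inter> A) \<le> r2 Y" by (rule rankf_mono[OF assms(2)]) (use Y h in auto)
    ultimately show "Un2 r1 r2 A \<le> Un2 r1 r2 B" using Y by linarith
  next
    fix A x assume h: "A \<subseteq> N \<and> x \<in> N"
    have fA: "finite A" using fin h by auto
    obtain Y where Y: "Y \<subseteq> A" "Un2 r1 r2 A = card (A - Y) + r1 Y + r2 Y" using U_ex[OF fA] by blast
    have "Un2 r1 r2 (insert x A) \<le> card (insert x A - Y) + r1 Y + r2 Y" by (rule U_le) (use fA Y in auto)
    moreover have "card (insert x A - Y) \<le> Suc (card (A - Y))"
    proof -
      have "card (insert x A - Y) \<le> card (insert x (A - Y))" using fA by (intro card_mono) auto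
      also have "\<dots> \<le> Suc (card (A - Y))" by (simp add: card_insert_if fA)
      finally show ?thesis .
    qed
    ultimately show "Un2 r1 r2 (insert x A) \<le> Suc (Un2 r1 r2 A)" using Y by linarith
  next
    fix A B assume h: "A \<subseteq> N \<and> B \<subseteq> N"
    have fAB: "finite A" "finite B" using fin h by auto
    obtain Y1 where Y1: "Y1 \<subseteq> A" "Un2 r1 r2 A = card (A - Y1) + r1 Y1 + r2 Y1" using U_ex[OF fAB(1)] by blast
    obtain Y2 where Y2: "Y2 \<subseteq> B" "Un2 r1 r2 B = card (B - Y2) + r1 Y2 + r2 Y2" using U_ex[OF fAB(2)] by blast
    have u1: "Un2 r1 r2 (A \<union> B) \<le> card ((A \<union> B) - (Y1 \<union> Y2)) + r1 (Y1 \<union> Y2) + r2 (Y1 \<union> Y2)"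
      by (rule U_le) (use fAB Y1 Y2 in auto)
    have u2: "Un2 r1 r2 (A \<inter> B) \<le> card ((A \<inter> B) - (Y1 \<inter> Y2)) + r1 (Y1 \<inter> Y2) + r2 (Y1 \<inter> Y2)"
      by (rule U_le) (use fAB Y1 Y2 in auto)
    let ?P = "A - Y1" and ?R = "B - Y2" and ?T1 = "(A \<union> B) - (Y1 \<union> Y2)" and ?T2 = "(A \<inter> B) - (Y1 \<inter> Y2)"
    have fPR: "finite ?P" "finite ?R" "finite ?T1" "finite ?T2" using fAB by auto
    have "card ?T1 + card ?T2 = card (?T1 \<union> ?T2) + card (?T1 \<inter> ?T2)" by (rule card_Un_Int) (use fPR in auto)
    also have "\<dots> \<le> card (?P \<union> ?R) + card (?P \<inter> ?R)"
      using fPR Y1 Y2 by (intro add_mono card_mono) auto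
    also have "\<dots> = card ?P + card ?R" by (rule card_Un_Int[symmetric]) (use fPR in auto)
    finally have cc: "card ?T1 + card ?T2 \<le> card ?P + card ?R" .
    have "r1 (Y1 \<union> Y2) + r1 (Y1 \<inter> Y2) \<le> r1 Y1 + r1 Y2" by (rule rankf_sub[OF assms(1)]) (use Y1 Y2 h in auto)
    moreover have "r2 (Y1 \<union> Y2) + r2 (Y1 \<inter> Y2) \<le> r2 Y1 + r2 Y2" by (rule rankf_sub[OF assms(2)]) (use Y1 Y2 h in auto)
    ultimately show "Un2 r1 r2 (A \<union> B) + Un2 r1 r2 (A \<inter> B) \<le> Un2 r1 r2 A + Un2 r1 r2 B"
      using u1 u2 cc Y1 Y2 by linarith
  qed
qed

lemma U_indep:
  assumes "rankf N r1" "rankf N r2" "I \<subseteq> N"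
  shows "Un2 r1 r2 I = card I \<longleftrightarrow> (\<exists>A B. A \<subseteq> I \<and> B \<subseteq> I \<and> A \<union> B = I \<and> r1 A = card A \<and> r2 B = card B)"
proof
  have fI: "finite I" using assms(3) rankf_fin[OF assms(1)] finite_subset by blast
  assume h: "Un2 r1 r2 I = card I"
  obtain A B Y where ab: "A \<subseteq> I" "B \<subseteq> I" "Y \<subseteq> I" "r1 A = card A" "r2 B = card B"
     "card (I - Y) + r1 Y + r2 Y \<le> card (A \<union> B)"
    using union2[OF fI rankf_restrict[OF assms(1,3)] rankf_restrict[OF assms(2,3)]] by blast
  have "Un2 r1 r2 I \<le> card (I - Y) + r1 Y + r2 Y" by (rule U_le[OF fI ab(3)])
  then have "card I \<le> card (A \<union> B)" using ab(6) h by linarith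
  moreover have "A \<union> B \<subseteq> I" using ab by auto
  ultimately have "A \<union> B = I" using fI card_seteq by blast
  then show "\<exists>A B. A \<subseteq> I \<and> B \<subseteq> I \<and> A \<union> B = I \<and> r1 A = card A \<and> r2 B = card B" using ab by blast
next
  have fI: "finite I" using assms(3) rankf_fin[OF assms(1)] finite_subset by blast
  assume "\<exists>A B. A \<subseteq> I \<and> B \<subseteq> I \<and> A \<union> B = I \<and> r1 A = card A \<and> r2 B = card B"
  then obtain A B where ab: "A \<subseteq> I" "B \<subseteq> I" "A \<union> B = I" "r1 A = card A" "r2 B = card B" by blast
  obtain Y where Y: "Y \<subseteq> I" "Un2 r1 r2 I = card (I - Y) + r1 Y + r2 Y" using U_ex[OF fI] by blast
  have "card (A \<union> B) \<le> card (I - Y) + r1 Y + r2 Y" by (rule union2_le[OF assms(1,2,3) ab(1,2) Y(1) ab(4,5)])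
  then have "card I \<le> Un2 r1 r2 I" using ab(3) Y(2) by simp
  moreover have "Un2 r1 r2 I \<le> card (I - {}) + r1 {} + r2 {}" by (rule U_le[OF fI]) auto
  ultimately show "Un2 r1 r2 I = card I" using rankf_empty[OF assms(1)] rankf_empty[OF assms(2)] by simp
qed

lemma rankf_basis:
  assumes "rankf N r" "X \<subseteq> N" shows "\<exists>J. J \<subseteq> X \<and> r J = card J \<and> r J = r X"
proof -
  have "finite X" using assms(2) rankf_fin[OF assms(1)] finite_subset by blast
  then show ?thesis using assms(2)
  proof (induction X rule: finite_induct)
    case empty then show ?case using rankf_empty[OF assms(1)] by auto
  next
    case (insert x F)
    have FN: "F \<subseteq> N" "x \<in> N" using insert by auto
    obtain J where J: "J \<subseteq> F" "r J = card J" "r J = r F" using insert(3)[OF FN(1)] by blast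
    have le: "r F \<le> r (insert x F)" by (rule rankf_mono[OF assms(1)]) (use insert(4) in auto)
    have le2: "r (insert x F) \<le> Suc (r F)" by (rule rankf_ins[OF assms(1) FN])
    show ?case
    proof (cases "r (insert x F) = r F")
      case True then show ?thesis using J by auto
    next
      case False
      then have s: "r (insert x F) = Suc (r F)" using le le2 by simp
      have "r (insert x J \<union> F) + r (insert x J \<inter> F) \<le> r (insert x J) + r F"
        by (rule rankf_sub[OF assms(1)]) (use J FN in auto)
      moreover have "insert x J \<union> F = insert x F" "insert x J \<inter> F = J" using J insert(2) by auto
      ultimately have "Suc (card J) \<le> r (insert x J)" using s J by simp
      moreover have "r (insert x J) \<le> card (insert x J)" by (rule rankf_card[OF assms(1)]) (use J FN in auto)
      moreover have "finite J" using J insert(1) finite_subset by blast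
      moreover have "x \<notin> J" using J insert(2) by blast
      ultimately have "r (insert x J) = card (insert x J)" "r (insert x J) = r (insert x F)" using s J by auto
      then show ?thesis using J by (intro exI[of _ "insert x J"]) auto
    qed
  qed
qed

lemma mrank_bridge:
  assumes "rankf N r" "\<And>I. I \<subseteq> N \<Longrightarrow> I \<in> F \<longleftrightarrow> r I = card I" "X \<subseteq> N"
  shows "mrank F X = r X"
proof -
  have fX: "finite X" using assms(3) rankf_fin[OF assms(1)] finite_subset by blast
  let ?S = "{card J | J. J \<subseteq> X \<and> J \<in> F}"
  have "?S \<subseteq> card ` Pow X" by auto
  then have fS: "finite ?S" using fX finite_subset by blast
  obtain J where J: "J \<subseteq> X" "r J = card J" "r J = r X" using rankf_basis[OF assms(1,3)] by blast
  have "J \<subseteq> N" using J assms(3) by auto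
  then have "J \<in> F" using assms(2) J(2) by blast
  then have inS: "r X \<in> ?S" using J by force
  have "\<And>y. y \<in> ?S \<Longrightarrow> y \<le> r X"
  proof -
    fix y assume "y \<in> ?S"
    then obtain K where K: "K \<subseteq> X" "K \<in> F" "y = card K" by blast
    have KN: "K \<subseteq> N" using K assms(3) by auto
    then have "r K = card K" using assms(2) K(2) by blast
    moreover have "r K \<le> r X" by (rule rankf_mono[OF assms(1) K(1) assms(3)])
    ultimately show "y \<le> r X" using K by simp
  qed
  then show ?thesis unfolding mrank_def using fS inS by (intro Max_eqI) auto
qed




fun uh :: "('a set \<Rightarrow> nat) \<Rightarrow> nat \<Rightarrow> 'a set \<Rightarrow> nat" where
  "uh r 0 = (\<lambda>X. 0)"
| "uh r (Suc h) = Un2 (uh r h) r"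

lemma rankf_uh: "rankf N r \<Longrightarrow> rankf N (uh r h)"
proof (induction h)
  case 0 then show ?case unfolding rankf_def by simp
next
  case (Suc h) then show ?case using rankf_U by simp
qed

lemma union_indep_0: "union_indep Ind 0 = {{}}"
  unfolding union_indep_def by auto

lemma union_indep_Suc:
  "X \<in> union_indep Ind (Suc h) \<longleftrightarrow> (\<exists>A B. A \<in> union_indep Ind h \<and> B \<in> Ind \<and> X = A \<union> B)"
proof
  assume "X \<in> union_indep Ind (Suc h)"
  then obtain F where F: "\<forall>i<Suc h. F i \<in> Ind" "X = (\<Union>i<Suc h. F i)" unfolding union_indep_def by blast
  have "X = (\<Union>i<h. F i) \<union> F h" using F(2) by (auto simp: lessThan_Suc)
  moreover have "(\<Union>i<h. F i) \<in> union_indep Ind h" using F(1) unfolding union_indep_def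
    by (intro CollectI exI[of _ F]) auto
  ultimately show "\<exists>A B. A \<in> union_indep Ind h \<and> B \<in> Ind \<and> X = A \<union> B" using F(1) by blast
next
  assume "\<exists>A B. A \<in> union_indep Ind h \<and> B \<in> Ind \<and> X = A \<union> B"
  then obtain F B where F: "\<forall>i<h. F i \<in> Ind" "B \<in> Ind" "X = (\<Union>i<h. F i) \<union> B"
    unfolding union_indep_def by blast
  define G where "G = F(h := B)"
  have "\<forall>i<Suc h. G i \<in> Ind" using F unfolding G_def by auto
  moreover have "X = (\<Union>i<Suc h. G i)" using F(3) unfolding G_def by (auto simp: lessThan_Suc)
  ultimately show "X \<in> union_indep Ind (Suc h)" unfolding union_indep_def by blast
qed

lemma uh_indep:
  assumes "rankf N r" "\<And>I. I \<subseteq> N \<Longrightarrow> I \<in> Ind \<longleftrightarrow> r I = card I"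
  shows "I \<subseteq> N \<Longrightarrow> I \<in> union_indep Ind h \<longleftrightarrow> uh r h I = card I"
proof (induction h arbitrary: I)
  case 0
  have "finite I" using assms(1) 0 rankf_fin finite_subset by blast
  then show ?case using union_indep_0 by auto
next
  case (Suc h)
  have "I \<in> union_indep Ind (Suc h) \<longleftrightarrow> (\<exists>A B. A \<in> union_indep Ind h \<and> B \<in> Ind \<and> I = A \<union> B)"
    by (rule union_indep_Suc)
  also have "\<dots> \<longleftrightarrow> (\<exists>A B. A \<subseteq> I \<and> B \<subseteq> I \<and> A \<union> B = I \<and> uh r h A = card A \<and> r B = card B)"
    using Suc assms(2) by (metis (no_types, lifting) Un_upper1 Un_upper2 subset_trans)
  also have "\<dots> \<longleftrightarrow> Un2 (uh r h) r I = card I"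
    using U_indep[OF rankf_uh[OF assms(1)] assms(1) Suc.prems] by blast
  finally show ?case by simp
qed

lemma uh_closed:
  assumes "rankf N r" "X \<subseteq> N"
  shows "(\<forall>Y\<subseteq>X. uh r h X \<le> card (X - Y) + h * r Y) \<and> (\<exists>Y\<subseteq>X. uh r h X = card (X - Y) + h * r Y)"
  using assms(2)
proof (induction h arbitrary: X)
  case 0 then show ?case by auto
next
  case (Suc h)
  have fX: "finite X" using assms(1) Suc.prems rankf_fin finite_subset by blast
  have part1: "\<forall>Y\<subseteq>X. uh r (Suc h) X \<le> card (X - Y) + Suc h * r Y"
  proof (intro allI impI)
    fix Y assume Y: "Y \<subseteq> X"
    have "uh r (Suc h) X \<le> card (X - Y) + uh r h Y + r Y" using U_le[OF fX Y] by simp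
    moreover have "uh r h Y \<le> card (Y - Y) + h * r Y" using Suc.IH[of Y] Y Suc.prems by blast
    ultimately show "uh r (Suc h) X \<le> card (X - Y) + Suc h * r Y" by simp
  qed
  obtain Y where Y: "Y \<subseteq> X" "uh r (Suc h) X = card (X - Y) + uh r h Y + r Y"
    using U_ex[OF fX, of "uh r h" r] by auto
  obtain Z where Z: "Z \<subseteq> Y" "uh r h Y = card (Y - Z) + h * r Z" using Suc.IH[of Y] Y Suc.prems by blast
  have "r Z \<le> r Y" by (rule rankf_mono[OF assms(1) Z(1)]) (use Y Suc.prems in auto)
  moreover have "card (X - Z) = card (X - Y) + card (Y - Z)"
  proof -
    have "X - Z = (X - Y) \<union> (Y - Z)" using Y Z by auto
    moreover have "card ((X - Y) \<union> (Y - Z)) = card (X - Y) + card (Y - Z)"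
      by (rule card_Un_disjoint) (use fX Y finite_subset in auto)
    ultimately show ?thesis by simp
  qed
  ultimately have "card (X - Z) + Suc h * r Z \<le> uh r (Suc h) X" using Y Z by simp
  then have "uh r (Suc h) X = card (X - Z) + Suc h * r Z" using part1 Z Y by (meson order_antisym subset_trans)
  then show ?case using part1 Z Y by (meson subset_trans)
qed




lemma card_ins_le: "finite S \<Longrightarrow> card (insert x S) \<le> Suc (card S)"
  by (simp add: card_insert_if)

context
  fixes N :: "'a set" and Ind :: "'a set set"
  assumes M: "matroid N Ind"
begin

lemma m_fin: "finite N" using M unfolding matroid_def by blast
lemma m_sub: "X \<in> Ind \<Longrightarrow> X \<subseteq> N" using M unfolding matroid_def by blast
lemma m_empty: "{} \<in> Ind" using M unfolding matroid_def by blast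
lemma m_down: "X \<in> Ind \<Longrightarrow> Y \<subseteq> X \<Longrightarrow> Y \<in> Ind" using M unfolding matroid_def by blast
lemma m_aug: "X \<in> Ind \<Longrightarrow> Y \<in> Ind \<Longrightarrow> card X < card Y \<Longrightarrow> \<exists>y\<in>Y - X. insert y X \<in> Ind"
  using M unfolding matroid_def by blast
lemma m_ifin: "X \<in> Ind \<Longrightarrow> finite X" using m_sub m_fin finite_subset by blast

lemma mr_finite: "finite {card X | X. X \<subseteq> A \<and> X \<in> Ind}"
proof -
  have "{card X | X. X \<subseteq> A \<and> X \<in> Ind} \<subseteq> {..card N}"
  proof
    fix n assume "n \<in> {card X | X. X \<subseteq> A \<and> X \<in> Ind}"
    then obtain X where "X \<in> Ind" "n = card X" by blast
    then have "n \<le> card N" using card_mono[OF m_fin m_sub] by blast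
    then show "n \<in> {..card N}" by simp
  qed
  then show ?thesis using finite_subset by blast
qed

lemma mr_ge: "X \<subseteq> A \<Longrightarrow> X \<in> Ind \<Longrightarrow> card X \<le> mrank Ind A"
  unfolding mrank_def using mr_finite by (intro Max_ge) auto

lemma mr_ex: "\<exists>X. X \<subseteq> A \<and> X \<in> Ind \<and> card X = mrank Ind A"
proof -
  have "mrank Ind A \<in> {card X | X. X \<subseteq> A \<and> X \<in> Ind}"
    unfolding mrank_def using mr_finite m_empty by (intro Max_in) auto
  then show ?thesis by auto
qed

lemma mr_extend:
  "J \<in> Ind \<Longrightarrow> J \<subseteq> A \<Longrightarrow> \<exists>K. J \<subseteq> K \<and> K \<subseteq> A \<and> K \<in> Ind \<and> card K = mrank Ind A"
proof (induction "mrank Ind A - card J" arbitrary: J rule: less_induct)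
  case less
  have le: "card J \<le> mrank Ind A" by (rule mr_ge[OF less.prems(2,1)])
  show ?case
  proof (cases "card J = mrank Ind A")
    case True then show ?thesis using less.prems by blast
  next
    case False
    obtain L where L: "L \<subseteq> A" "L \<in> Ind" "card L = mrank Ind A" using mr_ex by blast
    have "card J < card L" using le False L(3) by simp
    then obtain y where y: "y \<in> L - J" "insert y J \<in> Ind" using m_aug[OF less.prems(1) L(2)] by blast
    have "card (insert y J) = Suc (card J)" using y m_ifin less.prems by simp
    then have "mrank Ind A - card (insert y J) < mrank Ind A - card J" using le False by simp
    moreover have "insert y J \<subseteq> A" using y L less.prems by blast
    ultimately have "\<exists>K. insert y J \<subseteq> K \<and> K \<subseteq> A \<and> K \<in> Ind \<and> card K = mrank Ind A"
      by (rule less.hyps[OF _ y(2)])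
    then show ?thesis by blast
  qed
qed

lemma mr_rankf: "rankf N (mrank Ind)"
  unfolding rankf_def
proof (intro conjI allI impI)
  show "finite N" by (rule m_fin)
  show "mrank Ind {} = 0" using mr_ex[of "{}"] by auto
next
  fix A B :: "'a set" assume h: "A \<subseteq> B \<and> B \<subseteq> N"
  obtain X where "X \<subseteq> A" "X \<in> Ind" "card X = mrank Ind A" using mr_ex by blast
  then show "mrank Ind A \<le> mrank Ind B" using mr_ge[of X B] h by auto
next
  fix A x assume h: "A \<subseteq> N \<and> x \<in> N"
  obtain X where X: "X \<subseteq> insert x A" "X \<in> Ind" "card X = mrank Ind (insert x A)" using mr_ex by blast
  have x1: "X - {x} \<subseteq> A" using X by auto
  have x2: "X - {x} \<in> Ind" by (rule m_down[OF X(2)]) auto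
  have "card (X - {x}) \<le> mrank Ind A" by (rule mr_ge[OF x1 x2])
  moreover have "card X \<le> Suc (card (X - {x}))"
  proof -
    have "card X \<le> card (insert x (X - {x}))" using m_ifin[OF X(2)] by (intro card_mono) auto
    also have "\<dots> \<le> Suc (card (X - {x}))" by (rule card_ins_le) (use m_ifin[OF X(2)] in simp)
    finally show ?thesis .
  qed
  ultimately show "mrank Ind (insert x A) \<le> Suc (mrank Ind A)" using X by simp
next
  fix A B :: "'a set" assume h: "A \<subseteq> N \<and> B \<subseteq> N"
  obtain J where J: "J \<subseteq> A \<inter> B" "J \<in> Ind" "card J = mrank Ind (A \<inter> B)" using mr_ex by blast
  obtain K where K: "J \<subseteq> K" "K \<subseteq> A \<union> B" "K \<in> Ind" "card K = mrank Ind (A \<union> B)"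
  proof -
    have "J \<subseteq> A \<union> B" using J(1) by auto
    from mr_extend[OF J(2) this] show ?thesis using that by blast
  qed
  have fK: "finite K" by (rule m_ifin[OF K(3)])
  have "card (K \<inter> A) \<le> mrank Ind A" "card (K \<inter> B) \<le> mrank Ind B"
  proof -
    have k1: "K \<inter> A \<in> Ind" by (rule m_down[OF K(3)]) blast
    have k2: "K \<inter> B \<in> Ind" by (rule m_down[OF K(3)]) blast
    show "card (K \<inter> A) \<le> mrank Ind A" by (rule mr_ge[OF _ k1]) blast
    show "card (K \<inter> B) \<le> mrank Ind B" by (rule mr_ge[OF _ k2]) blast
  qed
  moreover have "card (K \<inter> A) + card (K \<inter> B) = card ((K \<inter> A) \<union> (K \<inter> B)) + card ((K \<inter> A) \<inter> (K \<inter> B))"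
    by (rule card_Un_Int) (use fK in auto)
  moreover have "card ((K \<inter> A) \<union> (K \<inter> B)) = card K"
  proof -
    have "(K \<inter> A) \<union> (K \<inter> B) = K" using K by auto
    then show ?thesis by simp
  qed
  moreover have "card J \<le> card ((K \<inter> A) \<inter> (K \<inter> B))" using J K fK by (intro card_mono) auto
  ultimately show "mrank Ind (A \<union> B) + mrank Ind (A \<inter> B) \<le> mrank Ind A + mrank Ind B"
    using J K by linarith
qed

lemma mr_indep: "I \<subseteq> N \<Longrightarrow> I \<in> Ind \<longleftrightarrow> mrank Ind I = card I"
proof
  assume "I \<subseteq> N" "I \<in> Ind"
  moreover obtain X where "X \<subseteq> I" "X \<in> Ind" "card X = mrank Ind I" using mr_ex by blast
  ultimately have "card X \<le> card I" "card I \<le> mrank Ind I"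
    using card_mono[OF m_ifin[of I]] mr_ge[of I I] by blast+
  then show "mrank Ind I = card I" using \<open>card X = mrank Ind I\<close> by simp
next
  assume h: "I \<subseteq> N" "mrank Ind I = card I"
  obtain X where X: "X \<subseteq> I" "X \<in> Ind" "card X = mrank Ind I" using mr_ex by blast
  have "finite I" using h m_fin finite_subset by blast
  then have "X = I" using X h card_subset_eq by (metis)
  then show "I \<in> Ind" using X by simp
qed

end




lemma Dmax_union:
  assumes r: "rankf N r" and Q: "Q \<subseteq> N" and lam: "lam \<ge> 0" and rr: "r = mrank Ind"
    and U: "is_Dmaximizer Ind Q lam U" and V: "is_Dmaximizer Ind Q lam V"
  shows "is_Dmaximizer Ind Q lam (U \<union> V)"
proof -
  have UQ: "U \<subseteq> Q" "V \<subseteq> Q" using U V unfolding is_Dmaximizer_def by auto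
  have fQ: "finite Q" by (rule finite_subset[OF Q rankf_fin[OF r]])
  have fin: "finite U" "finite V" by (rule finite_subset[OF UQ(1) fQ], rule finite_subset[OF UQ(2) fQ])
  have c: "card U + card V = card (U \<union> V) + card (U \<inter> V)" by (rule card_Un_Int) (use fin in auto)
  have s: "r (U \<union> V) + r (U \<inter> V) \<le> r U + r V" by (rule rankf_sub[OF r]) (use UQ Q in auto)
  have "real (r (U \<union> V)) + real (r (U \<inter> V)) \<le> real (r U) + real (r V)" using s by linarith
  then have "lam * (real (r (U \<union> V)) + real (r (U \<inter> V))) \<le> lam * (real (r U) + real (r V))"
    using lam by (rule mult_left_mono)
  then have sr: "lam * real (r (U \<union> V)) + lam * real (r (U \<inter> V)) \<le> lam * real (r U) + lam * real (r V)"
    by (simp add: distrib_left)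
  have cr: "real (card (U \<union> V)) + real (card (U \<inter> V)) = real (card U) + real (card V)" using c by linarith
  have "Dval Ind lam (U \<union> V) + Dval Ind lam (U \<inter> V) \<ge> Dval Ind lam U + Dval Ind lam V"
    unfolding Dval_def using sr cr rr by simp
  moreover have "Dval Ind lam (U \<inter> V) \<le> Dval Ind lam V"
  proof -
    have "U \<inter> V \<subseteq> Q" using UQ by auto
    then show ?thesis using V unfolding is_Dmaximizer_def by blast
  qed
  ultimately have ge: "Dval Ind lam (U \<union> V) \<ge> Dval Ind lam U" by linarith
  show ?thesis unfolding is_Dmaximizer_def
  proof (intro conjI allI impI)
    show "U \<union> V \<subseteq> Q" using UQ by auto
    fix W assume "W \<subseteq> Q"
    then have "Dval Ind lam W \<le> Dval Ind lam U" using U unfolding is_Dmaximizer_def by auto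
    then show "Dval Ind lam W \<le> Dval Ind lam (U \<union> V)" using ge by linarith
  qed
qed

lemma Dset_contains:
  assumes r: "rankf N r" and Q: "Q \<subseteq> N" and lam: "lam \<ge> 0" and rr: "r = mrank Ind"
    and Z: "is_Dmaximizer Ind Q lam Z"
  shows "Z \<subseteq> Dset Ind Q lam \<and> Dset Ind Q lam \<subseteq> Q"
proof -
  have fQ: "finite Q" by (rule finite_subset[OF Q rankf_fin[OF r]])
  let ?M = "{U. is_Dmaximizer Ind Q lam U}"
  have fM: "finite (card ` ?M)" using fQ unfolding is_Dmaximizer_def by simp
  have "Max (card ` ?M) \<in> card ` ?M" using fM Z by (intro Max_in) auto
  then obtain D where D: "is_Dmaximizer Ind Q lam D" "card D = Max (card ` ?M)" by auto
  have all: "\<And>U. is_Dmaximizer Ind Q lam U \<Longrightarrow> U \<subseteq> D"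
  proof -
    fix U assume U: "is_Dmaximizer Ind Q lam U"
    have UD: "is_Dmaximizer Ind Q lam (U \<union> D)" using Dmax_union[OF r Q lam rr U D(1)] .
    then have "card (U \<union> D) \<le> card D" using D(2) fM by (simp add: Max_ge)
    moreover have "finite (U \<union> D)" by (rule finite_subset[OF _ fQ]) (use UD in \<open>simp add: is_Dmaximizer_def\<close>)
    ultimately have "D = U \<union> D" using card_seteq[of "U \<union> D" D] by blast
    then show "U \<subseteq> D" by blast
  qed
  have "Dset Ind Q lam = D" unfolding Dset_def
  proof (rule the_equality)
    show "is_Dmaximizer Ind Q lam D \<and> (\<forall>V. is_Dmaximizer Ind Q lam V \<and> D \<subseteq> V \<longrightarrow> V = D)"
      using D(1) all by blast
  next
    fix U assume "is_Dmaximizer Ind Q lam U \<and> (\<forall>V. is_Dmaximizer Ind Q lam V \<and> U \<subseteq> V \<longrightarrow> V = U)"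
    then show "U = D" using all D(1) by blast
  qed
  then show ?thesis using all Z D(1) unfolding is_Dmaximizer_def by simp
qed

theorem lemmaA1:
  fixes N :: "'a set" and Ind :: "'a set set" and h :: nat and Q :: "'a set" and e :: 'a
  assumes "matroid N Ind"
    and "h \<ge> 1"
    and "Q \<subseteq> N"
    and "e \<in> N - Q"
    and "mrank (union_indep Ind h) (Q \<union> {e}) = mrank (union_indep Ind h) Q"
  shows "e \<in> mspan N Ind (Dset Ind Q (real h))"
proof -
  define r where "r = mrank Ind"
  have rf: "rankf N r" unfolding r_def using mr_rankf[OF assms(1)] .
  have ri: "\<And>I. I \<subseteq> N \<Longrightarrow> I \<in> Ind \<longleftrightarrow> r I = card I" unfolding r_def using mr_indep[OF assms(1)] by blast
  define rh where "rh = uh r h"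
  have rhf: "rankf N rh" unfolding rh_def using rankf_uh[OF rf] .
  have rhi: "\<And>I. I \<subseteq> N \<Longrightarrow> I \<in> union_indep Ind h \<longleftrightarrow> rh I = card I"
    unfolding rh_def using uh_indep[OF rf ri] by blast
  have QeN: "Q \<union> {e} \<subseteq> N" using assms(3,4) by blast
  have eq: "rh (Q \<union> {e}) = rh Q"
    using assms(5) mrank_bridge[OF rhf rhi QeN] mrank_bridge[OF rhf rhi assms(3)] by simp
  have fQ: "finite Q" by (rule finite_subset[OF assms(3) rankf_fin[OF rf]])
  have eQ: "e \<notin> Q" using assms(4) by blast
  have clQ: "\<forall>Y\<subseteq>Q. rh Q \<le> card (Q - Y) + h * r Y" unfolding rh_def using uh_closed[OF rf assms(3)] by blast
  obtain Y where Y: "Y \<subseteq> Q \<union> {e}" "rh (Q \<union> {e}) = card (Q \<union> {e} - Y) + h * r Y"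
    unfolding rh_def using uh_closed[OF rf QeN] by blast
  have eY: "e \<in> Y"
  proof (rule ccontr)
    assume "e \<notin> Y"
    then have "Y \<subseteq> Q" "Q \<union> {e} - Y = insert e (Q - Y)" using Y(1) by auto
    moreover have "card (insert e (Q - Y)) = Suc (card (Q - Y))" using fQ eQ by simp
    ultimately have "card (Q \<union> {e} - Y) = Suc (card (Q - Y))" by simp
    moreover have "rh Q \<le> card (Q - Y) + h * r Y" using clQ \<open>Y \<subseteq> Q\<close> by blast
    ultimately show False using Y(2) eq by simp
  qed
  define Z where "Z = Y - {e}"
  have ZQ: "Z \<subseteq> Q" using Y(1) Z_def by auto
  have QZ: "Q - Z = Q \<union> {e} - Y" using eY eQ Z_def by auto
  have rZY: "r Z \<le> r Y" by (rule rankf_mono[OF rf]) (use Y(1) QeN Z_def in auto)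
  have le0: "rh Q \<le> card (Q - Z) + h * r Z" using clQ ZQ by blast
  have c: "card (Q \<union> {e} - Y) = card (Q - Z)" using QZ by simp
  have Y2': "rh Q = card (Q - Z) + h * r Y" using Y(2) eq c by simp
  then have "h * r Y \<le> h * r Z" using le0 by linarith
  then have rYZ: "r Y = r Z" using rZY assms(2) by simp
  have rhQ: "rh Q = card (Q - Z) + h * r Z" using Y2' rYZ by simp
  have maxZ: "is_Dmaximizer Ind Q (real h) Z"
    unfolding is_Dmaximizer_def
  proof (intro conjI allI impI)
    show "Z \<subseteq> Q" by fact
    fix V assume V: "V \<subseteq> Q"
    have "card (Q - Z) + h * r Z \<le> card (Q - V) + h * r V" using clQ V rhQ by simp
    moreover have "card (Q - Z) = card Q - card Z" by (rule card_Diff_subset[OF finite_subset[OF ZQ fQ] ZQ])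
    moreover have "card (Q - V) = card Q - card V" by (rule card_Diff_subset[OF finite_subset[OF V fQ] V])
    moreover have "card Z \<le> card Q" by (rule card_mono[OF fQ ZQ])
    moreover have "card V \<le> card Q" by (rule card_mono[OF fQ V])
    ultimately have "card V + h * r Z \<le> card Z + h * r V" by linarith
    then have "real (card V + h * r Z) \<le> real (card Z + h * r V)" by (simp only: of_nat_le_iff)
    then have "real (card V) + real h * real (r Z) \<le> real (card Z) + real h * real (r V)" by simp
    then show "Dval Ind (real h) V \<le> Dval Ind (real h) Z" unfolding Dval_def r_def by simp
  qed
  define D where "D = Dset Ind Q (real h)"
  have ZD: "Z \<subseteq> D" "D \<subseteq> Q" unfolding D_def using Dset_contains[OF rf assms(3) _ r_def maxZ] by simp_all
  have eD: "e \<notin> D" using \<open>D \<subseteq> Q\<close> eQ by blast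
  have YZ: "Y = insert e Z" using eY Z_def by auto
  have DN: "D \<subseteq> N" using ZD assms(3) by blast
  have "r (insert e Z \<union> D) + r (insert e Z \<inter> D) \<le> r (insert e Z) + r D"
    by (rule rankf_sub[OF rf]) (use YZ Y(1) QeN DN in auto)
  moreover have "insert e Z \<union> D = D \<union> {e}" "insert e Z \<inter> D = Z" using ZD eD by auto
  moreover have "r D \<le> r (D \<union> {e})" by (rule rankf_mono[OF rf]) (use DN assms(4) in auto)
  ultimately have "r (D \<union> {e}) = r D" using rYZ YZ by simp
  then show ?thesis unfolding mspan_def D_def[symmetric] r_def using assms(4) by simp
qed



end
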